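(* Let $n,N\ge1$ and positive integers $r_1,\dots,r_N,r$ with $r_i\le r\le\lfloor(n-1)/2\rfloor$. Consider either (a) $d=n$, $p=r_i+1$, $q=n-r_i$ for some $i$, and $\mathcal{A}(y)=\mathcal{H}_{r_i+1}(y)$; or (b) $d=Nn$, $p=r+1$, $q=N(n-r)$, $\mathcal{A}(y)=[\mathcal{H}_{r+1}(y_1)\cdots\mathcal{H}_{r+1}(y_N)]$ for $y=(y_1^\top,\dots,y_N^\top)^\top$. Fix $\hat y\in\mathbb{R}^d$ and define, for $R\in\mathbb{R}^{1\times p}$, $$\Psi(R)=\inf_{y\in\mathbb{R}^d}\Big\{\tfrac12\|y-\hat y\|^2:\ R\mathcal{A}(y)=0\Big\}.$$ Then $\Psi$ is smooth on $\mathbb{R}^{1\times p}\setminus\{0\}$.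
   Context: For $x\in\mathbb{R}^n$ and $1\le l\le n$, $\mathcal{H}_l(x)\in\mathbb{R}^{l\times(n-l+1)}$ is the Hankel matrix with $(i,j)$ entry $x(i+j-1)$. *)

theory Defs
  imports "HOL-Analysis.Analysis"
begin

text \<open>For open S this is exactly: all iterated partial derivatives of all orders
exist and are continuous on S.\<close>
definition smooth_on :: "'a::euclidean_space set \<Rightarrow> ('a \<Rightarrow> real) \<Rightarrow> bool" where
  "smooth_on S f \<longleftrightarrow>
     (\<exists>F. f \<in> F \<and>
        (\<forall>g\<in>F. \<exists>D. (\<forall>i\<in>Basis. D i \<in> F) \<and>
             (\<forall>x\<in>S. (g has_derivative (\<lambda>h. \<Sum>i\<in>Basis. (h \<bullet> i) * D i x)) (at x))))"

text \<open>Hankel matrix H_l(x), x in R^n, with 0-based indices: entry (i,j) = x(i+j)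
 for i < l, j < n - l + 1 (the size l x (n-l+1) is supplied separately).\<close>
definition hankel :: "(nat \<Rightarrow> real) \<Rightarrow> nat \<Rightarrow> nat \<Rightarrow> real" where
  "hankel x i j = x (i + j)"

text \<open>Block Hankel matrix [H_l(y_1) ... H_l(y_N)] for y in R^(N n), where (0-based)
 block m is y_m(t) = y(m n + t), t < n.\<close>
definition block_hankel :: "nat \<Rightarrow> nat \<Rightarrow> (nat \<Rightarrow> real) \<Rightarrow> nat \<Rightarrow> nat \<Rightarrow> real" where
  "block_hankel n l y i c =
     hankel (\<lambda>t. y ((c div (n - l + 1)) * n + t)) i (c mod (n - l + 1))"

text \<open>Psi(R) = inf { 1/2 ||y - yhat||^2 : y in R^d, R A(y) = 0 }, where R is a
 1 x p row vector (indices < p), A(y) is p x q (indices < p, < q), vectors in R^d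
 are functions nat => real vanishing from index d on.\<close>
definition Psi :: "nat \<Rightarrow> nat \<Rightarrow> nat \<Rightarrow> ((nat \<Rightarrow> real) \<Rightarrow> nat \<Rightarrow> nat \<Rightarrow> real)
                   \<Rightarrow> (nat \<Rightarrow> real) \<Rightarrow> (nat \<Rightarrow> real) \<Rightarrow> real" where
  "Psi d p q A yhat R =
     Inf {(1/2) * (\<Sum>k<d. (y k - yhat k)^2) | y.
            (\<forall>k\<ge>d. y k = 0) \<and> (\<forall>c<q. (\<Sum>j<p. R j * A y j c) = 0)}"

end

theory Submission
  imports Defs "Jordan_Normal_Form.Determinant"
begin

no_notation vec_index (infixl "$" 100)
no_notation scalar_prod (infix "\<bullet>" 70)

section \<open>Polynomial functions and their smoothness\<close>

inductive_set polys :: "('a::euclidean_space \<Rightarrow> real) set" where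
  pconst: "(\<lambda>x. c) \<in> polys"
| pcoord: "b \<in> Basis \<Longrightarrow> (\<lambda>x. inner x b) \<in> polys"
| padd: "f \<in> polys \<Longrightarrow> g \<in> polys \<Longrightarrow> (\<lambda>x. f x + g x) \<in> polys"
| pmult: "f \<in> polys \<Longrightarrow> g \<in> polys \<Longrightarrow> (\<lambda>x. f x * g x) \<in> polys"

lemma polys_sum: "(\<And>a. a \<in> A \<Longrightarrow> f a \<in> polys) \<Longrightarrow> (\<lambda>x. \<Sum>a\<in>A. f a x) \<in> polys"
proof (induction A rule: infinite_finite_induct)
  case (infinite A)
  then show ?case by (simp add: pconst)
next
  case empty
  then show ?case by (simp add: pconst)
next
  case (insert a F)
  then show ?case by (simp add: padd)
qed

lemma polys_prod: "(\<And>a. a \<in> A \<Longrightarrow> f a \<in> polys) \<Longrightarrow> (\<lambda>x. \<Prod>a\<in>A. f a x) \<in> polys"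
proof (induction A rule: infinite_finite_induct)
  case (infinite A)
  then show ?case by (simp add: pconst)
next
  case empty
  then show ?case by (simp add: pconst)
next
  case (insert a F)
  then show ?case by (simp add: pmult)
qed

lemma polys_cmult: "f \<in> polys \<Longrightarrow> (\<lambda>x. c * f x) \<in> polys"
  using pmult[OF pconst] by blast

lemma polys_minus: "f \<in> polys \<Longrightarrow> g \<in> polys \<Longrightarrow> (\<lambda>x. f x - g x) \<in> polys"
proof -
  assume "f \<in> polys" "g \<in> polys"
  then have "(\<lambda>x. f x + (-1) * g x) \<in> polys" by (intro padd polys_cmult)
  then show ?thesis by simp
qed

lemma polys_deriv:
  "f \<in> polys \<Longrightarrow> \<exists>D. (\<forall>i\<in>Basis. D i \<in> polys) \<and>
      (\<forall>x. (f has_derivative (\<lambda>h. \<Sum>i\<in>Basis. inner h i * D i x)) (at x))"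
proof (induction rule: polys.induct)
  case (pconst c)
  show ?case
    by (rule exI[of _ "\<lambda>i x. 0"]) (auto intro: polys.pconst)
next
  case (pcoord b)
  have "(\<lambda>h. \<Sum>i\<in>Basis. inner h i * inner i b) = (\<lambda>h. inner h b)"
  proof
    fix h :: 'a
    have "inner h b = (\<Sum>i\<in>Basis. inner h i * inner b i)" by (rule euclidean_inner)
    also have "\<dots> = (\<Sum>i\<in>Basis. inner h i * inner i b)" by (simp add: inner_commute)
    finally show "(\<Sum>i\<in>Basis. inner h i * inner i b) = inner h b" by simp
  qed
  then show ?case
    by (intro exI[of _ "\<lambda>i x. inner i b"]) (auto intro: polys.pconst bounded_linear.has_derivative bounded_linear_inner_left)
next
  case (padd f g)
  then obtain Df Dg where f: "(\<forall>i\<in>Basis. Df i \<in> polys)"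
      "\<forall>x. (f has_derivative (\<lambda>h. \<Sum>i\<in>Basis. inner h i * Df i x)) (at x)"
    and g: "(\<forall>i\<in>Basis. Dg i \<in> polys)"
      "\<forall>x. (g has_derivative (\<lambda>h. \<Sum>i\<in>Basis. inner h i * Dg i x)) (at x)" by blast
  show ?case
  proof (intro exI[of _ "\<lambda>i x. Df i x + Dg i x"] conjI allI ballI)
    show "\<And>i. i \<in> Basis \<Longrightarrow> (\<lambda>x. Df i x + Dg i x) \<in> polys" using f g by (auto intro: polys.padd)
    fix x
    have "((\<lambda>x. f x + g x) has_derivative (\<lambda>h. (\<Sum>i\<in>Basis. inner h i * Df i x) + (\<Sum>i\<in>Basis. inner h i * Dg i x))) (at x)"
      using f g by (intro has_derivative_add) auto
    moreover have "(\<lambda>h. (\<Sum>i\<in>Basis. inner h i * Df i x) + (\<Sum>i\<in>Basis. inner h i * Dg i x))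
       = (\<lambda>h. \<Sum>i\<in>Basis. inner h i * (Df i x + Dg i x))"
      by (auto simp: sum.distrib distrib_left)
    ultimately show "((\<lambda>x. f x + g x) has_derivative (\<lambda>h. \<Sum>i\<in>Basis. inner h i * (Df i x + Dg i x))) (at x)"
      by simp
  qed
next
  case (pmult f g)
  then obtain Df Dg where f: "(\<forall>i\<in>Basis. Df i \<in> polys)"
      "\<forall>x. (f has_derivative (\<lambda>h. \<Sum>i\<in>Basis. inner h i * Df i x)) (at x)"
    and g: "(\<forall>i\<in>Basis. Dg i \<in> polys)"
      "\<forall>x. (g has_derivative (\<lambda>h. \<Sum>i\<in>Basis. inner h i * Dg i x)) (at x)" by blast
  show ?case
  proof (intro exI[of _ "\<lambda>i x. f x * Dg i x + Df i x * g x"] conjI allI ballI)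
    show "\<And>i. i \<in> Basis \<Longrightarrow> (\<lambda>x. f x * Dg i x + Df i x * g x) \<in> polys"
      using f(1) g(1) pmult.hyps by (intro polys.padd polys.pmult) auto
    fix x
    have "((\<lambda>x. f x * g x) has_derivative (\<lambda>h. f x * (\<Sum>i\<in>Basis. inner h i * Dg i x) + (\<Sum>i\<in>Basis. inner h i * Df i x) * g x)) (at x)"
      using f g by (intro has_derivative_mult) auto
    moreover have "(\<lambda>h. f x * (\<Sum>i\<in>Basis. inner h i * Dg i x) + (\<Sum>i\<in>Basis. inner h i * Df i x) * g x)
       = (\<lambda>h. \<Sum>i\<in>Basis. inner h i * (f x * Dg i x + Df i x * g x))"
    proof
      fix h
      have "(\<Sum>i\<in>Basis. inner h i * (f x * Dg i x + Df i x * g x))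
          = (\<Sum>i\<in>Basis. f x * (inner h i * Dg i x) + (inner h i * Df i x) * g x)"
        by (intro sum.cong refl) (simp add: algebra_simps)
      also have "\<dots> = f x * (\<Sum>i\<in>Basis. inner h i * Dg i x) + (\<Sum>i\<in>Basis. inner h i * Df i x) * g x"
        by (simp only: sum.distrib sum_distrib_left sum_distrib_right)
      finally show "f x * (\<Sum>i\<in>Basis. inner h i * Dg i x) + (\<Sum>i\<in>Basis. inner h i * Df i x) * g x
          = (\<Sum>i\<in>Basis. inner h i * (f x * Dg i x + Df i x * g x))" by simp
    qed
    ultimately show "((\<lambda>x. f x * g x) has_derivative (\<lambda>h. \<Sum>i\<in>Basis. inner h i * (f x * Dg i x + Df i x * g x))) (at x)"
      by simp
  qed
qed

lemma ratio_deriv: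
  assumes P: "P \<in> polys" and Q: "Q \<in> polys"
  shows "\<exists>D. (\<forall>i\<in>Basis. \<exists>P' k'. P' \<in> polys \<and> D i = (\<lambda>x. P' x * inverse (Q x) ^ k')) \<and>
      (\<forall>x. Q x \<noteq> 0 \<longrightarrow> ((\<lambda>x. P x * inverse (Q x) ^ k) has_derivative (\<lambda>h. \<Sum>i\<in>Basis. inner h i * D i x)) (at x))"
proof -
  obtain DP where DP: "(\<forall>i\<in>Basis. DP i \<in> polys)"
      "\<forall>x. (P has_derivative (\<lambda>h. \<Sum>i\<in>Basis. inner h i * DP i x)) (at x)"
    using polys_deriv[OF P] by blast
  obtain DQ where DQ: "(\<forall>i\<in>Basis. DQ i \<in> polys)"
      "\<forall>x. (Q has_derivative (\<lambda>h. \<Sum>i\<in>Basis. inner h i * DQ i x)) (at x)"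
    using polys_deriv[OF Q] by blast
  show ?thesis
  proof (intro exI[of _ "\<lambda>i x. (DP i x * Q x - of_nat k * P x * DQ i x) * inverse (Q x) ^ (Suc k)"] conjI allI ballI impI)
    fix i :: 'a assume i: "i \<in> Basis"
    have "(\<lambda>x. DP i x * Q x - of_nat k * P x * DQ i x) \<in> polys"
      using DP DQ i P Q by (auto intro!: polys_minus polys.pmult polys.pconst)
    then show "\<exists>P' k'. P' \<in> polys \<and> (\<lambda>x. (DP i x * Q x - of_nat k * P x * DQ i x) * inverse (Q x) ^ Suc k) = (\<lambda>x. P' x * inverse (Q x) ^ k')"
      by blast
  next
    fix x assume Qx: "Q x \<noteq> 0"
    let ?dP = "\<lambda>h. \<Sum>i\<in>Basis. inner h i * DP i x"
    let ?dQ = "\<lambda>h. \<Sum>i\<in>Basis. inner h i * DQ i x"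
    have "((\<lambda>x. inverse (Q x)) has_derivative (\<lambda>h. - (inverse (Q x) * ?dQ h * inverse (Q x)))) (at x)"
      using DQ Qx by (intro Deriv.has_derivative_inverse) auto
    then have "((\<lambda>x. inverse (Q x) ^ k) has_derivative (\<lambda>h. of_nat k * (- (inverse (Q x) * ?dQ h * inverse (Q x))) * inverse (Q x) ^ (k - 1))) (at x)"
      by (rule has_derivative_power)
    then have "((\<lambda>x. P x * inverse (Q x) ^ k) has_derivative
        (\<lambda>h. P x * (of_nat k * (- (inverse (Q x) * ?dQ h * inverse (Q x))) * inverse (Q x) ^ (k - 1)) + ?dP h * inverse (Q x) ^ k)) (at x)"
      using DP by (intro has_derivative_mult) auto
    moreover have "(\<lambda>h. P x * (of_nat k * (- (inverse (Q x) * ?dQ h * inverse (Q x))) * inverse (Q x) ^ (k - 1)) + ?dP h * inverse (Q x) ^ k)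
       = (\<lambda>h. \<Sum>i\<in>Basis. inner h i * ((DP i x * Q x - of_nat k * P x * DQ i x) * inverse (Q x) ^ (Suc k)))"
    proof
      fix h
      define u where "u = inverse (Q x)"
      define dQ where "dQ = ?dQ h"
      define dP where "dP = ?dP h"
      have B: "u ^ k = Q x * u ^ Suc k" using Qx by (simp add: u_def)
      have R: "(\<Sum>i\<in>Basis. inner h i * ((DP i x * Q x - of_nat k * P x * DQ i x) * u ^ (Suc k)))
          = dP * (Q x * u ^ Suc k) - (of_nat k * P x * u ^ Suc k) * dQ"
      proof -
        have "(\<Sum>i\<in>Basis. inner h i * ((DP i x * Q x - of_nat k * P x * DQ i x) * u ^ (Suc k)))
            = (\<Sum>i\<in>Basis. inner h i * DP i x * (Q x * u ^ Suc k) - (of_nat k * P x * u ^ Suc k) * (inner h i * DQ i x))"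
          by (intro sum.cong refl) (simp add: algebra_simps)
        also have "\<dots> = dP * (Q x * u ^ Suc k) - (of_nat k * P x * u ^ Suc k) * dQ"
          unfolding dP_def dQ_def by (simp only: sum_subtractf sum_distrib_left sum_distrib_right)
        finally show ?thesis .
      qed
      show "P x * (of_nat k * (- (inverse (Q x) * ?dQ h * inverse (Q x))) * inverse (Q x) ^ (k - 1)) + ?dP h * inverse (Q x) ^ k
        = (\<Sum>i\<in>Basis. inner h i * ((DP i x * Q x - of_nat k * P x * DQ i x) * inverse (Q x) ^ (Suc k)))"
        unfolding u_def[symmetric] dQ_def[symmetric] dP_def[symmetric] R
      proof (cases "k = 0")
        case True
        then show "P x * (of_nat k * (- (u * dQ * u)) * u ^ (k - 1)) + dP * u ^ k
          = dP * (Q x * u ^ Suc k) - (of_nat k * P x * u ^ Suc k) * dQ"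
          using B by simp
      next
        case False
        then obtain m where m: "k = Suc m" by (cases k) auto
        have A: "u * u * u ^ (k - 1) = u ^ Suc k" unfolding m by (simp add: mult.assoc)
        have "P x * (of_nat k * (- (u * dQ * u)) * u ^ (k - 1)) + dP * u ^ k
           = - (P x * of_nat k * dQ) * (u * u * u ^ (k - 1)) + dP * u ^ k"
          by (simp add: algebra_simps)
        also have "\<dots> = - (P x * of_nat k * dQ) * u ^ Suc k + dP * (Q x * u ^ Suc k)"
          by (simp only: A B)
        also have "\<dots> = dP * (Q x * u ^ Suc k) - (of_nat k * P x * u ^ Suc k) * dQ"
          by (simp add: algebra_simps)
        finally show "P x * (of_nat k * (- (u * dQ * u)) * u ^ (k - 1)) + dP * u ^ k
          = dP * (Q x * u ^ Suc k) - (of_nat k * P x * u ^ Suc k) * dQ" .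
      qed
    qed
    ultimately show "((\<lambda>x. P x * inverse (Q x) ^ k) has_derivative (\<lambda>h. \<Sum>i\<in>Basis. inner h i * ((DP i x * Q x - of_nat k * P x * DQ i x) * inverse (Q x) ^ (Suc k)))) (at x)"
      by simp
  qed
qed

lemma smooth_rational:
  assumes S: "open S" and P: "P \<in> polys" and Q: "Q \<in> polys"
    and nz: "\<forall>x\<in>S. Q x \<noteq> 0" and f: "\<forall>x\<in>S. f x = P x / Q x"
  shows "smooth_on S f"
proof -
  define F where "F = insert f {(\<lambda>x. P' x * inverse (Q x) ^ k) | P' k. P' \<in> polys}"
  have ratio: "\<exists>D. (\<forall>i\<in>Basis. D i \<in> F) \<and> (\<forall>x\<in>S. (g has_derivative (\<lambda>h. \<Sum>i\<in>Basis. inner h i * D i x)) (at x))"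
    if "g \<in> {(\<lambda>x. P' x * inverse (Q x) ^ k) | P' k. P' \<in> polys}" for g
  proof -
    from that obtain P' k where g: "g = (\<lambda>x. P' x * inverse (Q x) ^ k)" "P' \<in> polys" by blast
    from ratio_deriv[OF g(2) Q, of k] obtain D where
      D: "\<forall>i\<in>Basis. \<exists>P'' k'. P'' \<in> polys \<and> D i = (\<lambda>x. P'' x * inverse (Q x) ^ k')"
        "\<forall>x. Q x \<noteq> 0 \<longrightarrow> ((\<lambda>x. P' x * inverse (Q x) ^ k) has_derivative (\<lambda>h. \<Sum>i\<in>Basis. inner h i * D i x)) (at x)"
      by blast
    show ?thesis
    proof (intro exI[of _ D] conjI ballI)
      fix i :: 'a assume "i \<in> Basis" then show "D i \<in> F" using D(1) unfolding F_def by blast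
    next
      fix x assume "x \<in> S" then show "(g has_derivative (\<lambda>h. \<Sum>i\<in>Basis. inner h i * D i x)) (at x)"
        using D(2) nz g(1) by auto
    qed
  qed
  show ?thesis
    unfolding smooth_on_def
  proof (intro exI[of _ F] conjI ballI)
    show "f \<in> F" unfolding F_def by simp
    fix g assume "g \<in> F"
    then consider "g = f" | "g \<in> {(\<lambda>x. P' x * inverse (Q x) ^ k) | P' k. P' \<in> polys}"
      unfolding F_def by blast
    then show "\<exists>D. (\<forall>i\<in>Basis. D i \<in> F) \<and> (\<forall>x\<in>S. (g has_derivative (\<lambda>h. \<Sum>i\<in>Basis. (h \<bullet> i) * D i x)) (at x))"
    proof cases
      case 1
      have "(\<lambda>x. P x * inverse (Q x) ^ 1) \<in> {(\<lambda>x. P' x * inverse (Q x) ^ k) | P' k. P' \<in> polys}"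
        using P by blast
      from ratio[OF this] obtain D where D: "\<forall>i\<in>Basis. D i \<in> F"
        "\<forall>x\<in>S. ((\<lambda>x. P x * inverse (Q x) ^ 1) has_derivative (\<lambda>h. \<Sum>i\<in>Basis. inner h i * D i x)) (at x)"
        by blast
      show ?thesis
      proof (intro exI[of _ D] conjI ballI)
        show "\<And>i. i \<in> Basis \<Longrightarrow> D i \<in> F" using D by blast
        fix x assume x: "x \<in> S"
        show "(g has_derivative (\<lambda>h. \<Sum>i\<in>Basis. (h \<bullet> i) * D i x)) (at x)"
          using has_derivative_transform_within_open[OF D(2)[rule_format, OF x] S x, of f] f 1
          by (simp add: divide_inverse)
      qed
    next
      case 2
      then show ?thesis using ratio by simp
    qed
  qed
qed

section \<open>The least-squares value under linear constraints\<close>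

definition Gm :: "nat \<Rightarrow> nat \<Rightarrow> (nat \<Rightarrow> nat \<Rightarrow> real) \<Rightarrow> real mat" where
  "Gm d q M = mat q q (\<lambda>(i,j). \<Sum>k<d. M i k * M j k)"

definition bv :: "nat \<Rightarrow> (nat \<Rightarrow> nat \<Rightarrow> real) \<Rightarrow> (nat \<Rightarrow> real) \<Rightarrow> nat \<Rightarrow> real" where
  "bv d M yh c = (\<Sum>k<d. M c k * yh k)"

definition wv :: "nat \<Rightarrow> nat \<Rightarrow> (nat \<Rightarrow> nat \<Rightarrow> real) \<Rightarrow> (nat \<Rightarrow> real) \<Rightarrow> nat \<Rightarrow> real" where
  "wv d q M yh c = (\<Sum>c'<q. adj_mat (Gm d q M) $$ (c,c') * bv d M yh c')"

lemma Gm_carrier: "Gm d q M \<in> carrier_mat q q"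
  by (simp add: Gm_def)

lemma Gm_nz:
  assumes indep: "\<forall>z. (\<forall>k<d. (\<Sum>c<q. z c * M c k) = 0) \<longrightarrow> (\<forall>c<q. z c = 0)"
  shows "Determinant.det (Gm d q M) \<noteq> 0"
proof
  assume "Determinant.det (Gm d q M) = 0"
  then obtain v where v: "v \<in> carrier_vec q" "v \<noteq> 0\<^sub>v q" "Gm d q M *\<^sub>v v = 0\<^sub>v q"
    using det_0_iff_vec_prod_zero[OF Gm_carrier] by blast
  define z where "z c = vec_index v c" for c
  have Gz: "(\<Sum>c'<q. (\<Sum>k<d. M c k * M c' k) * z c') = 0" if c: "c < q" for c
  proof -
    have "vec_index (Gm d q M *\<^sub>v v) c = 0" using v(3) c by simp
    then show ?thesis using c v(1) by (simp add: Gm_def scalar_prod_def z_def atLeast0LessThan)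
  qed
  have "(\<Sum>k<d. (\<Sum>c<q. z c * M c k)^2) = (\<Sum>k<d. \<Sum>c<q. \<Sum>c'<q. z c * M c k * (z c' * M c' k))"
    by (simp add: power2_eq_square sum_product)
  also have "\<dots> = (\<Sum>c<q. \<Sum>k<d. \<Sum>c'<q. z c * M c k * (z c' * M c' k))"
    by (rule sum.swap)
  also have "\<dots> = (\<Sum>c<q. \<Sum>c'<q. \<Sum>k<d. z c * M c k * (z c' * M c' k))"
    by (intro sum.cong refl sum.swap)
  also have "\<dots> = (\<Sum>c<q. z c * (\<Sum>c'<q. (\<Sum>k<d. M c k * M c' k) * z c'))"
    by (simp add: sum_distrib_left sum_distrib_right mult_ac)
  also have "\<dots> = 0" using Gz by simp
  finally have "(\<Sum>k<d. (\<Sum>c<q. z c * M c k)^2) = 0" .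
  then have "\<forall>k<d. (\<Sum>c<q. z c * M c k) = 0"
    by (subst (asm) sum_nonneg_eq_0_iff) auto
  then have "\<forall>c<q. z c = 0" using indep by blast
  then have "v = 0\<^sub>v q" using v(1) by (intro eq_vecI) (auto simp: z_def)
  then show False using v(2) by simp
qed

lemma adj_identity:
  assumes c: "c < q" and c2: "c'' < q"
  shows "(\<Sum>c'<q. (\<Sum>k<d. M c k * M c' k) * adj_mat (Gm d q M) $$ (c',c''))
        = Determinant.det (Gm d q M) * (if c = c'' then 1 else 0)"
proof -
  have "(Gm d q M * adj_mat (Gm d q M)) $$ (c,c'') = (Determinant.det (Gm d q M) \<cdot>\<^sub>m 1\<^sub>m q) $$ (c,c'')"
    using adj_mat(2)[OF Gm_carrier] by simp
  moreover have "adj_mat (Gm d q M) \<in> carrier_mat q q" using adj_mat(1)[OF Gm_carrier] .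
  ultimately show ?thesis using c c2
    by (simp add: Gm_def scalar_prod_def atLeast0LessThan)
qed

lemma Inf_formula:
  assumes indep: "\<forall>z. (\<forall>k<d. (\<Sum>c<q. z c * M c k) = 0) \<longrightarrow> (\<forall>c<q. z c = 0)"
  shows "Inf {(1/2) * (\<Sum>k<d. (y k - yh k)^2) | y. (\<forall>k\<ge>d. y k = 0) \<and> (\<forall>c<q. (\<Sum>k<d. M c k * y k) = 0)}
      = (1/2) * (\<Sum>c<q. wv d q M yh c * bv d M yh c) / Determinant.det (Gm d q M)"
proof -
  define \<Delta> where "\<Delta> = Determinant.det (Gm d q M)"
  define G where "G c c' = (\<Sum>k<d. M c k * M c' k)" for c c'
  define A where "A = adj_mat (Gm d q M)"
  define b where "b = bv d M yh"
  define w where "w = wv d q M yh"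
  have \<Delta>: "\<Delta> \<noteq> 0" unfolding \<Delta>_def by (rule Gm_nz[OF indep])
  define v where "v c = w c / \<Delta>" for c
  have Gw: "(\<Sum>c'<q. G c c' * w c') = \<Delta> * b c" if c: "c < q" for c
  proof -
    have "(\<Sum>c'<q. G c c' * w c') = (\<Sum>c'<q. \<Sum>c''<q. G c c' * A $$ (c',c'') * b c'')"
      by (simp add: w_def wv_def sum_distrib_left A_def b_def mult.assoc)
    also have "\<dots> = (\<Sum>c''<q. \<Sum>c'<q. G c c' * A $$ (c',c'') * b c'')"
      by (rule sum.swap)
    also have "\<dots> = (\<Sum>c''<q. (\<Sum>c'<q. G c c' * A $$ (c',c'')) * b c'')"
      by (simp add: sum_distrib_right)
    also have "\<dots> = (\<Sum>c''<q. (\<Delta> * (if c = c'' then 1 else 0)) * b c'')"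
      by (intro sum.cong refl) (simp add: adj_identity[OF c] G_def A_def \<Delta>_def)
    also have "\<dots> = \<Delta> * b c" using c by (simp add: if_distrib if_distribR sum.If_cases)
    finally show ?thesis .
  qed
  have Gv: "(\<Sum>c'<q. G c c' * v c') = b c" if c: "c < q" for c
  proof -
    have "(\<Sum>c'<q. G c c' * v c') = (\<Sum>c'<q. G c c' * w c') / \<Delta>"
      by (simp add: v_def sum_divide_distrib)
    then show ?thesis using Gw[OF c] \<Delta> by simp
  qed
  define t where "t k = (\<Sum>c<q. M c k * v c)" for k
  define ys where "ys k = (if k < d then yh k - t k else 0)" for k
  have Mt: "(\<Sum>k<d. M c k * t k) = b c" if c: "c < q" for c
  proof -
    have "(\<Sum>k<d. M c k * t k) = (\<Sum>k<d. \<Sum>c'<q. M c k * M c' k * v c')"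
      by (simp add: t_def sum_distrib_left mult.assoc)
    also have "\<dots> = (\<Sum>c'<q. \<Sum>k<d. M c k * M c' k * v c')" by (rule sum.swap)
    also have "\<dots> = (\<Sum>c'<q. G c c' * v c')" by (simp add: G_def sum_distrib_right)
    finally show ?thesis using Gv[OF c] by simp
  qed
  have feas: "(\<Sum>k<d. M c k * ys k) = 0" if c: "c < q" for c
  proof -
    have "(\<Sum>k<d. M c k * ys k) = (\<Sum>k<d. M c k * yh k - M c k * t k)"
      by (intro sum.cong refl) (simp add: ys_def algebra_simps)
    also have "\<dots> = b c - b c" using Mt[OF c] by (simp add: sum_subtractf b_def bv_def)
    finally show ?thesis by simp
  qed
  have tt: "(\<Sum>k<d. (t k)^2) = (\<Sum>c<q. v c * b c)"
  proof -
    have "(\<Sum>k<d. (t k)^2) = (\<Sum>k<d. \<Sum>c<q. v c * (M c k * t k))"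
      by (simp add: power2_eq_square t_def sum_distrib_left sum_distrib_right mult_ac)
    also have "\<dots> = (\<Sum>c<q. \<Sum>k<d. v c * (M c k * t k))" by (rule sum.swap)
    also have "\<dots> = (\<Sum>c<q. v c * b c)"
      by (intro sum.cong refl) (simp add: Mt sum_distrib_left[symmetric])
    finally show ?thesis .
  qed
  have lower: "(\<Sum>k<d. (t k)^2) \<le> (\<Sum>k<d. (y k - yh k)^2)"
    if y: "\<forall>c<q. (\<Sum>k<d. M c k * y k) = 0" for y
  proof -
    have cross: "(\<Sum>k<d. (y k - ys k) * t k) = 0"
    proof -
      have "(\<Sum>k<d. (y k - ys k) * t k) = (\<Sum>k<d. \<Sum>c<q. v c * (M c k * y k - M c k * ys k))"
        by (simp add: t_def sum_distrib_left algebra_simps)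
      also have "\<dots> = (\<Sum>c<q. \<Sum>k<d. v c * (M c k * y k - M c k * ys k))" by (rule sum.swap)
      also have "\<dots> = (\<Sum>c<q. v c * ((\<Sum>k<d. M c k * y k) - (\<Sum>k<d. M c k * ys k)))"
        by (simp add: right_diff_distrib sum_subtractf sum_distrib_left)
      also have "\<dots> = 0" using y feas by simp
      finally show ?thesis .
    qed
    have "(\<Sum>k<d. (y k - yh k)^2) = (\<Sum>k<d. ((y k - ys k) - t k)^2)"
      by (intro sum.cong refl) (simp add: ys_def)
    also have "\<dots> = (\<Sum>k<d. (y k - ys k)^2) - 2 * (\<Sum>k<d. (y k - ys k) * t k) + (\<Sum>k<d. (t k)^2)"
    proof -
      have "\<And>k. ((y k - ys k) - t k)^2 = (y k - ys k)^2 - 2 * ((y k - ys k) * t k) + (t k)^2"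
        by (simp add: power2_eq_square algebra_simps)
      then have "(\<Sum>k<d. ((y k - ys k) - t k)^2) = (\<Sum>k<d. (y k - ys k)^2 - 2 * ((y k - ys k) * t k) + (t k)^2)"
        by simp
      also have "\<dots> = (\<Sum>k<d. (y k - ys k)^2) - 2 * (\<Sum>k<d. (y k - ys k) * t k) + (\<Sum>k<d. (t k)^2)"
        by (simp only: sum.distrib sum_subtractf sum_distrib_left)
      finally show ?thesis .
    qed
    also have "\<dots> \<ge> (\<Sum>k<d. (t k)^2)" using cross by (simp add: sum_nonneg)
    finally show ?thesis .
  qed
  have val: "(1/2) * (\<Sum>k<d. (t k)^2) = (1/2) * (\<Sum>c<q. w c * b c) / \<Delta>"
    using tt by (simp add: v_def sum_divide_distrib mult.commute)
  have "Inf {(1/2) * (\<Sum>k<d. (y k - yh k)^2) | y. (\<forall>k\<ge>d. y k = 0) \<and> (\<forall>c<q. (\<Sum>k<d. M c k * y k) = 0)}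
      = (1/2) * (\<Sum>k<d. (t k)^2)"
  proof (rule cInf_eq_minimum)
    have e1: "(1/2) * (\<Sum>k<d. (t k)^2) = (1/2) * (\<Sum>k<d. (ys k - yh k)^2)"
      by (simp add: ys_def)
    have e2: "(\<forall>k\<ge>d. ys k = 0) \<and> (\<forall>c<q. (\<Sum>k<d. M c k * ys k) = 0)"
      using feas by (simp add: ys_def)
    show "(1/2) * (\<Sum>k<d. (t k)^2) \<in> {(1/2) * (\<Sum>k<d. (y k - yh k)^2) | y. (\<forall>k\<ge>d. y k = 0) \<and> (\<forall>c<q. (\<Sum>k<d. M c k * y k) = 0)}"
      unfolding e1 using e2 by blast
  next
    fix x assume "x \<in> {(1/2) * (\<Sum>k<d. (y k - yh k)^2) | y. (\<forall>k\<ge>d. y k = 0) \<and> (\<forall>c<q. (\<Sum>k<d. M c k * y k) = 0)}"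
    then show "(1/2) * (\<Sum>k<d. (t k)^2) \<le> x" using lower by auto
  qed
  then show ?thesis using val by (simp add: w_def b_def \<Delta>_def)
qed

section \<open>Polynomiality of determinants and adjugates\<close>

lemma polys_det:
  assumes A: "\<And>x. A x \<in> carrier_mat n n"
    and ent: "\<And>i j. i < n \<Longrightarrow> j < n \<Longrightarrow> (\<lambda>x. A x $$ (i,j)) \<in> polys"
  shows "(\<lambda>x. Determinant.det (A x)) \<in> polys"
proof -
  have "(\<lambda>x. Determinant.det (A x)) =
     (\<lambda>x. \<Sum>p\<in>{p. p permutes {0..<n}}. signof p * (\<Prod>i = 0..<n. A x $$ (i, p i)))"
    using det_def'[OF A] by (intro ext) auto
  also have "\<dots> \<in> polys"
  proof (intro polys_sum polys_cmult polys_prod)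
    fix p i assume p: "p \<in> {p. p permutes {0..<n}}" and i: "i \<in> {0..<n}"
    then have "p i \<in> {0..<n}" by (simp add: permutes_in_image)
    then show "(\<lambda>x. A x $$ (i, p i)) \<in> polys" using i by (intro ent) auto
  qed
  finally show ?thesis .
qed

lemma polys_adj:
  assumes A: "\<And>x. A x \<in> carrier_mat n n"
    and ent: "\<And>i j. i < n \<Longrightarrow> j < n \<Longrightarrow> (\<lambda>x. A x $$ (i,j)) \<in> polys"
    and i: "i < n" and j: "j < n"
  shows "(\<lambda>x. adj_mat (A x) $$ (i,j)) \<in> polys"
proof -
  have "(\<lambda>x. adj_mat (A x) $$ (i,j)) = (\<lambda>x. (-1)^(j+i) * Determinant.det (mat_delete (A x) j i))"
  proof
    fix x
    have "dim_row (A x) = n" "dim_col (A x) = n" using A[of x] by auto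
    then show "adj_mat (A x) $$ (i,j) = (-1)^(j+i) * Determinant.det (mat_delete (A x) j i)"
      using i j by (simp add: adj_mat_def cofactor_def)
  qed
  also have "\<dots> \<in> polys"
  proof (intro polys_cmult polys_det)
    show "\<And>x. mat_delete (A x) j i \<in> carrier_mat (n-1) (n-1)" using A by (rule mat_delete_carrier)
    fix i' j' assume i': "i' < n - 1" and j': "j' < n - 1"
    have "(\<lambda>x. mat_delete (A x) j i $$ (i', j')) =
        (\<lambda>x. A x $$ (if i' < j then i' else Suc i', if j' < i then j' else Suc j'))"
    proof
      fix x
      have "dim_row (A x) = n" "dim_col (A x) = n" using A[of x] by auto
      then show "mat_delete (A x) j i $$ (i', j') = A x $$ (if i' < j then i' else Suc i', if j' < i then j' else Suc j')"
        using i' j' by (simp add: mat_delete_def)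
    qed
    also have "\<dots> \<in> polys" using i' j' by (intro ent) auto
    finally show "(\<lambda>x. mat_delete (A x) j i $$ (i', j')) \<in> polys" .
  qed
  finally show ?thesis .
qed

section \<open>Banded constraint matrices\<close>

definition Mb :: "nat \<Rightarrow> (nat \<Rightarrow> nat) \<Rightarrow> (nat \<Rightarrow> real) \<Rightarrow> nat \<Rightarrow> nat \<Rightarrow> real" where
  "Mb p bo R c k = (if bo c \<le> k \<and> k < bo c + p then R (k - bo c) else 0)"

lemma Mb_sum:
  assumes "bo c + p \<le> d"
  shows "(\<Sum>j<p. R j * y (bo c + j)) = (\<Sum>k<d. Mb p bo R c k * y k)"
proof -
  have "(\<Sum>j<p. R j * y (bo c + j)) = (\<Sum>k\<in>{bo c..<bo c + p}. R (k - bo c) * y k)"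
  proof -
    have "(\<Sum>k\<in>{0 + bo c..<p + bo c}. R (k - bo c) * y k) = (\<Sum>j\<in>{0..<p}. R (j + bo c - bo c) * y (j + bo c))"
      by (rule sum.shift_bounds_nat_ivl)
    then show ?thesis by (simp add: atLeast0LessThan add.commute)
  qed
  also have "\<dots> = (\<Sum>k\<in>{bo c..<bo c + p}. Mb p bo R c k * y k)"
    by (intro sum.cong refl) (simp add: Mb_def)
  also have "\<dots> = (\<Sum>k<d. Mb p bo R c k * y k)"
    using assms by (intro sum.mono_neutral_left) (auto simp: Mb_def)
  finally show ?thesis .
qed

lemma Mb_indep:
  assumes bd: "\<forall>c<q. bo c + p \<le> d"
    and mono: "\<forall>c c'. c < c' \<longrightarrow> c' < q \<longrightarrow> bo c < bo c'"
    and nz: "\<exists>j<p. R j \<noteq> 0"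
  shows "\<forall>z. (\<forall>k<d. (\<Sum>c<q. z c * Mb p bo R c k) = 0) \<longrightarrow> (\<forall>c<q. z c = 0)"
proof (rule allI, rule impI, rule ccontr)
  fix z assume h: "\<forall>k<d. (\<Sum>c<q. z c * Mb p bo R c k) = 0" and "\<not> (\<forall>c<q. z c = 0)"
  then have ex: "\<exists>c. c < q \<and> z c \<noteq> 0" by blast
  define c0 where "c0 = (LEAST c. c < q \<and> z c \<noteq> 0)"
  have c0: "c0 < q" "z c0 \<noteq> 0" using LeastI_ex[OF ex] by (auto simp: c0_def)
  have c0min: "z c = 0" if "c < c0" for c
    using not_less_Least[OF that[unfolded c0_def]] that c0 by auto
  define j0 where "j0 = (LEAST j. j < p \<and> R j \<noteq> 0)"
  have j0: "j0 < p" "R j0 \<noteq> 0" using LeastI_ex[OF nz] by (auto simp: j0_def)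
  have j0min: "R j = 0" if "j < j0" for j
    using not_less_Least[OF that[unfolded j0_def]] that j0 by auto
  define k where "k = bo c0 + j0"
  have k: "k < d" using bd c0 j0 by (auto simp: k_def)
  have "(\<Sum>c<q. z c * Mb p bo R c k) = z c0 * Mb p bo R c0 k + (\<Sum>c\<in>{..<q} - {c0}. z c * Mb p bo R c k)"
    using c0 by (subst sum.remove[of _ c0]) auto
  also have "(\<Sum>c\<in>{..<q} - {c0}. z c * Mb p bo R c k) = 0"
  proof (rule sum.neutral, intro ballI)
    fix c assume c: "c \<in> {..<q} - {c0}"
    show "z c * Mb p bo R c k = 0"
    proof (cases "c < c0")
      case True then show ?thesis using c0min by simp
    next
      case False
      then have "c0 < c" using c by auto
      then have "bo c0 < bo c" using mono c by auto
      then show ?thesis using j0min by (auto simp: Mb_def k_def)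
    qed
  qed
  also have "Mb p bo R c0 k = R j0" using j0 by (simp add: Mb_def k_def)
  finally have "z c0 * R j0 = 0" using h k by simp
  then show False using c0 j0 by simp
qed

lemma Psi_eq:
  assumes bd: "\<forall>c<q. bo c + p \<le> d"
    and A: "\<And>y j c. c < q \<Longrightarrow> j < p \<Longrightarrow> A y j c = y (bo c + j)"
  shows "Psi d p q A yh Rf = Inf {(1/2) * (\<Sum>k<d. (y k - yh k)^2) | y.
            (\<forall>k\<ge>d. y k = 0) \<and> (\<forall>c<q. (\<Sum>k<d. Mb p bo Rf c k * y k) = 0)}"
proof -
  have eq: "(\<Sum>j<p. Rf j * A y j c) = (\<Sum>k<d. Mb p bo Rf c k * y k)" if c: "c < q" for y c
  proof -
    have "(\<Sum>j<p. Rf j * A y j c) = (\<Sum>j<p. Rf j * y (bo c + j))"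
      using A c by (intro sum.cong refl) auto
    also have "\<dots> = (\<Sum>k<d. Mb p bo Rf c k * y k)" using bd c by (intro Mb_sum) auto
    finally show ?thesis .
  qed
  show ?thesis unfolding Psi_def by (simp add: eq)
qed

lemma generic_smooth:
  fixes e :: "nat \<Rightarrow> 'p::finite"
  assumes bij: "bij_betw e {0..<CARD('p)} (UNIV :: 'p set)"
    and bd: "\<forall>c<q. bo c + CARD('p) \<le> d"
    and mono: "\<forall>c c'. c < c' \<longrightarrow> c' < q \<longrightarrow> bo c < bo c'"
  shows "smooth_on (UNIV - {0}) (\<lambda>R :: real^'p. Inf {(1/2) * (\<Sum>k<d. (y k - yh k)^2) | y.
            (\<forall>k\<ge>d. y k = 0) \<and> (\<forall>c<q. (\<Sum>k<d. Mb CARD('p) bo (\<lambda>j. R $ e j) c k * y k) = 0)})"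
proof -
  define M where "M R = Mb CARD('p) bo (\<lambda>j. R $ e j)" for R :: "real^'p"
  have Mpoly: "(\<lambda>R. M R c k) \<in> polys" for c k
  proof (cases "bo c \<le> k \<and> k < bo c + CARD('p)")
    case True
    have "(\<lambda>R. M R c k) = (\<lambda>R. inner R (axis (e (k - bo c)) 1))"
      using True by (intro ext) (simp add: M_def Mb_def cart_eq_inner_axis)
    also have "\<dots> \<in> polys" by (intro pcoord) simp
    finally show ?thesis .
  next
    case False
    then have "(\<lambda>R. M R c k) = (\<lambda>R. 0)" using False by (intro ext) (auto simp add: M_def Mb_def)
    then show ?thesis using pconst by metis
  qed
  have Gent: "(\<lambda>R. Gm d q (M R) $$ (i,j)) \<in> polys" if "i < q" "j < q" for i j
  proof -
    have "(\<lambda>R. Gm d q (M R) $$ (i,j)) = (\<lambda>R. \<Sum>k<d. M R i k * M R j k)"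
      using that by (intro ext) (simp add: Gm_def)
    also have "\<dots> \<in> polys" by (intro polys_sum pmult Mpoly)
    finally show ?thesis .
  qed
  define Q where "Q R = Determinant.det (Gm d q (M R))" for R
  define P where "P R = (1/2) * (\<Sum>c<q. wv d q (M R) yh c * bv d (M R) yh c)" for R
  have Qp: "Q \<in> polys" unfolding Q_def by (rule polys_det[where n=q]) (auto intro: Gm_carrier Gent)
  have bp: "(\<lambda>R. bv d (M R) yh c) \<in> polys" for c
    unfolding bv_def by (intro polys_sum pmult Mpoly pconst)
  have Pp: "P \<in> polys" unfolding P_def wv_def
    by (intro polys_cmult polys_sum pmult bp polys_adj[where n=q] Gm_carrier Gent) auto
  have indep: "\<forall>z. (\<forall>k<d. (\<Sum>c<q. z c * M R c k) = 0) \<longrightarrow> (\<forall>c<q. z c = 0)"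
    if R: "R \<in> UNIV - {0}" for R :: "real^'p"
  proof -
    from R have "R \<noteq> 0" by simp
    then have "\<exists>i. R $ i \<noteq> 0" by (metis Finite_Cartesian_Product.vec_eq_iff Finite_Cartesian_Product.zero_index)
    then obtain i where i: "R $ i \<noteq> 0" by blast
    from bij have "e ` {0..<CARD('p)} = UNIV" by (simp add: bij_betw_def)
    then obtain j where j: "j < CARD('p)" "e j = i" by (metis UNIV_I atLeastLessThan_iff imageE)
    show ?thesis unfolding M_def
      by (rule Mb_indep[OF bd mono]) (use i j in auto)
  qed
  show ?thesis
  proof (rule smooth_rational[OF _ Pp Qp])
    show "open (UNIV - {0 :: real^'p})" by (intro open_Diff open_UNIV closed_singleton)
    show "\<forall>x\<in>UNIV - {0}. Q x \<noteq> 0"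
    proof
      fix x :: "real^'p" assume "x \<in> UNIV - {0}"
      from Gm_nz[OF indep[OF this]] show "Q x \<noteq> 0" unfolding Q_def .
    qed
    show "\<forall>x\<in>UNIV - {0}. Inf {(1/2) * (\<Sum>k<d. (y k - yh k)^2) | y.
            (\<forall>k\<ge>d. y k = 0) \<and> (\<forall>c<q. (\<Sum>k<d. Mb CARD('p) bo (\<lambda>j. x $ e j) c k * y k) = 0)} = P x / Q x"
    proof
      fix x :: "real^'p" assume "x \<in> UNIV - {0}"
      from Inf_formula[OF indep[OF this], of yh]
      show "Inf {(1/2) * (\<Sum>k<d. (y k - yh k)^2) | y.
            (\<forall>k\<ge>d. y k = 0) \<and> (\<forall>c<q. (\<Sum>k<d. Mb CARD('p) bo (\<lambda>j. x $ e j) c k * y k) = 0)} = P x / Q x"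
        unfolding P_def Q_def M_def by simp
    qed
  qed
qed

theorem theorem4p2:
  fixes n N r :: nat and rs :: "nat \<Rightarrow> nat" and yhat :: "nat \<Rightarrow> real"
    and e :: "nat \<Rightarrow> 'p::finite"
  assumes "n \<ge> 1" and "N \<ge> 1"
    and "\<forall>i\<in>{1..N}. 0 < rs i \<and> rs i \<le> r"
    and "0 < r" and "r \<le> (n - 1) div 2"
    and "bij_betw e {0..<CARD('p)} (UNIV :: 'p set)"
  shows "(\<forall>i\<in>{1..N}. CARD('p) = rs i + 1 \<longrightarrow>
            smooth_on (UNIV - {0})
              (\<lambda>R :: real^'p. Psi n (rs i + 1) (n - rs i) hankel yhat (\<lambda>j. R $ e j)))
       \<and> (CARD('p) = r + 1 \<longrightarrow>
            smooth_on (UNIV - {0})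
              (\<lambda>R :: real^'p. Psi (N * n) (r + 1) (N * (n - r)) (block_hankel n (r + 1)) yhat
                                 (\<lambda>j. R $ e j)))"
proof (intro conjI ballI impI)
  have "(n - 1) div 2 \<le> n - 1" by simp
  then have rn: "r < n" using assms(1,5) by linarith
  fix i assume i: "i \<in> {1..N}" and card: "CARD('p) = rs i + 1"
  have "rs i \<le> r" using assms(3) i by blast
  then have ri: "rs i < n" using rn by linarith
  have bd: "\<forall>c<n - rs i. c + CARD('p) \<le> n" using card ri by auto
  have eq: "Psi n (rs i + 1) (n - rs i) hankel yhat (\<lambda>j. R $ e j) =
      Inf {(1/2) * (\<Sum>k<n. (y k - yhat k)^2) | y.
            (\<forall>k\<ge>n. y k = 0) \<and> (\<forall>c<n - rs i. (\<Sum>k<n. Mb CARD('p) (\<lambda>c. c) (\<lambda>j. R $ e j) c k * y k) = 0)}"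
    for R :: "real^'p"
    unfolding card
  proof (rule Psi_eq)
    show "\<forall>c<n - rs i. c + (rs i + 1) \<le> n" using bd card by simp
    fix y :: "nat \<Rightarrow> real" and j c :: nat
    show "hankel y j c = y (c + j)" unfolding hankel_def by (simp only: add.commute)
  qed
  show "smooth_on (UNIV - {0}) (\<lambda>R :: real^'p. Psi n (rs i + 1) (n - rs i) hankel yhat (\<lambda>j. R $ e j))"
    unfolding eq by (rule generic_smooth[OF assms(6) bd]) auto
next
  have "(n - 1) div 2 \<le> n - 1" by simp
  then have rn: "r < n" using assms(1,5) by linarith
  assume card: "CARD('p) = r + 1"
  define w where "w = n - r"
  have w: "w \<ge> 1" "w + r = n" using rn by (auto simp: w_def)
  have w': "n - (r + 1) + 1 = w" using rn by (simp add: w_def)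
  define bo where "bo c = (c div w) * n + c mod w" for c
  have bd: "\<forall>c<N * (n - r). bo c + CARD('p) \<le> N * n"
  proof (intro allI impI)
    fix c assume c: "c < N * (n - r)"
    have a: "c div w < N" using c by (simp add: w_def less_mult_imp_div_less)
    have "c mod w < w" using w by simp
    then have m: "c mod w + r + 1 \<le> n" using w by linarith
    have "bo c + CARD('p) = (c div w) * n + (c mod w + r + 1)" by (simp add: bo_def card)
    also have "\<dots> \<le> (c div w) * n + n" using m by simp
    also have "\<dots> = Suc (c div w) * n" by simp
    also have "\<dots> \<le> N * n" using a by (intro mult_le_mono1) simp
    finally show "bo c + CARD('p) \<le> N * n" .
  qed
  have mono: "\<forall>c c'. c < c' \<longrightarrow> c' < N * (n - r) \<longrightarrow> bo c < bo c'"
  proof (intro allI impI)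
    fix c c' :: nat assume cc: "c < c'"
    have le: "c div w \<le> c' div w" using cc by (simp add: div_le_mono)
    show "bo c < bo c'"
    proof (cases "c div w = c' div w")
      case True
      have "c mod w < c' mod w"
      proof -
        have "c' div w * w = c div w * w" using True by simp
        then show ?thesis using cc div_mult_mod_eq[of c w] div_mult_mod_eq[of c' w] by linarith
      qed
      then show ?thesis using True by (simp add: bo_def)
    next
      case False
      then have lt: "Suc (c div w) \<le> c' div w" using le by simp
      have "bo c < (c div w) * n + w" using w by (simp add: bo_def)
      also have "\<dots> \<le> (c div w) * n + n" using w by simp
      also have "\<dots> = Suc (c div w) * n" by simp
      also have "\<dots> \<le> (c' div w) * n" using lt by (intro mult_le_mono1)
      also have "\<dots> \<le> bo c'" by (simp add: bo_def)
      finally show ?thesis .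
    qed
  qed
  have eq: "Psi (N * n) (r + 1) (N * (n - r)) (block_hankel n (r + 1)) yhat (\<lambda>j. R $ e j) =
      Inf {(1/2) * (\<Sum>k<N * n. (y k - yhat k)^2) | y.
            (\<forall>k\<ge>N * n. y k = 0) \<and> (\<forall>c<N * (n - r). (\<Sum>k<N * n. Mb CARD('p) bo (\<lambda>j. R $ e j) c k * y k) = 0)}"
    for R :: "real^'p"
    unfolding card
  proof (rule Psi_eq)
    show "\<forall>c<N * (n - r). bo c + (r + 1) \<le> N * n" using bd card by simp
    fix y :: "nat \<Rightarrow> real" and j c :: nat
    have "block_hankel n (r + 1) y j c = y ((c div w) * n + (j + c mod w))"
      unfolding block_hankel_def hankel_def w' ..
    also have "\<dots> = y (bo c + j)" unfolding bo_def by (simp only: add_ac)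
    finally show "block_hankel n (r + 1) y j c = y (bo c + j)" .
  qed
  show "smooth_on (UNIV - {0}) (\<lambda>R :: real^'p. Psi (N * n) (r + 1) (N * (n - r)) (block_hankel n (r + 1)) yhat (\<lambda>j. R $ e j))"
    unfolding eq by (rule generic_smooth[OF assms(6) bd mono])
qed

end
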